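(* Let $q$ be a prime power and $h\geq 2$. Let $\vec u,\vec v,\vec w$ be three $\mathbb{F}_{q^h}$-linearly independent vectors in $\mathbb{F}_{q^h}^3$, and let $f:\mathbb{F}_{q^h}\to\mathbb{F}_q$ be a nonzero $\mathbb{F}_q$-linear functional. Define $U=\{x\vec u+f(x)\vec v+y\vec w : x\in\mathbb{F}_{q^h},\ y\in\mathbb{F}_q\}$. Then $\mathcal{L}_U$ is a blocking set of $\mathrm{PG}(2,q^h)$ of size $q^h+q^{h-1}+1$.
   Context: For an $\mathbb{F}_q$-subspace $U$ of $\mathbb{F}_{q^h}^3$, $\mathcal{L}_U=\{\langle\vec z\rangle_{\mathbb{F}_{q^h}} : \vec z\in U\setminus\{0\}\}$, viewed as a set of points of $\mathrm{PG}(2,q^h)$. A blocking set is a point set meeting every line. *)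

theory Defs
  imports "HOL-Analysis.Finite_Cartesian_Product" "HOL-Computational_Algebra.Primes"
begin

definition is_subfield :: "'a::field set \<Rightarrow> bool" where
  "is_subfield K \<longleftrightarrow> 0 \<in> K \<and> 1 \<in> K \<and>
     (\<forall>x\<in>K. \<forall>y\<in>K. x + y \<in> K \<and> x * y \<in> K) \<and>
     (\<forall>x\<in>K. - x \<in> K) \<and> (\<forall>x\<in>K. x \<noteq> 0 \<longrightarrow> inverse x \<in> K)"

definition is_K_linear_functional :: "'a::field set \<Rightarrow> ('a \<Rightarrow> 'a) \<Rightarrow> bool" where
  "is_K_linear_functional K f \<longleftrightarrow> (\<forall>x. f x \<in> K) \<and>
     (\<forall>x y. f (x + y) = f x + f y) \<and> (\<forall>c\<in>K. \<forall>x. f (c * x) = c * f x)"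

definition lin_indep3 :: "'a::field ^ 3 \<Rightarrow> 'a ^ 3 \<Rightarrow> 'a ^ 3 \<Rightarrow> bool" where
  "lin_indep3 u v w \<longleftrightarrow>
     (\<forall>a b c. a *s u + b *s v + c *s w = 0 \<longrightarrow> a = 0 \<and> b = 0 \<and> c = 0)"

definition pt :: "'a::field ^ 3 \<Rightarrow> ('a ^ 3) set" where
  "pt z = {c *s z | c. True}"

definition PG2_points :: "('a::field ^ 3) set set" where
  "PG2_points = {pt z | z. z \<noteq> 0}"

definition proj_line :: "'a::field ^ 3 \<Rightarrow> ('a ^ 3) set set" where
  "proj_line a = {pt z | z. z \<noteq> 0 \<and> (\<Sum>i\<in>UNIV. a $ i * z $ i) = 0}"

definition PG2_lines :: "('a::field ^ 3) set set set" where
  "PG2_lines = {proj_line a | a. a \<noteq> 0}"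

definition blocking_set :: "('a::field ^ 3) set set \<Rightarrow> bool" where
  "blocking_set B \<longleftrightarrow> B \<subseteq> PG2_points \<and> (\<forall>l\<in>PG2_lines. B \<inter> l \<noteq> {})"

definition LU :: "('a::field ^ 3) set \<Rightarrow> ('a ^ 3) set set" where
  "LU U = {pt z | z. z \<in> U \<and> z \<noteq> 0}"

end

theory Submission
  imports Defs
begin

lemma G_diff: "((a::'a::field) *s u + b *s v + c *s w) - (a' *s u + b' *s v + c' *s w)
   = (a - a') *s u + (b - b') *s v + (c - c') *s w"
  by (simp add: vec_eq_iff algebra_simps)

lemma G_eq:
  assumes "lin_indep3 u v w"
  shows "((a::'a::field) *s u + b *s v + c *s w = a' *s u + b' *s v + c' *s w) \<longleftrightarrow> (a = a' \<and> b = b' \<and> c = c')"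
proof
  assume "a *s u + b *s v + c *s w = a' *s u + b' *s v + c' *s w"
  then have "(a - a') *s u + (b - b') *s v + (c - c') *s w = 0"
    by (metis G_diff right_minus_eq)
  then show "a = a' \<and> b = b' \<and> c = c'" using assms unfolding lin_indep3_def by force
qed auto

lemma G_smult: "(d::'a::field) *s (a *s u + b *s v + c *s w) = (d*a) *s u + (d*b) *s v + (d*c) *s w"
  by (simp add: vec_eq_iff algebra_simps)

lemma pt_eqD: "pt z = pt z' \<Longrightarrow> \<exists>c. z' = c *s z"
proof -
  assume "pt z = pt z'"
  moreover have "z' \<in> pt z'" unfolding pt_def by (auto intro: exI[of _ 1])
  ultimately show ?thesis unfolding pt_def by auto
qed

lemma pt_smult: "(c::'a::field) \<noteq> 0 \<Longrightarrow> pt (c *s z) = pt z"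
  unfolding pt_def
proof (intro set_eqI iffI)
  fix y assume "c \<noteq> 0" "y \<in> {d *s (c *s z) |d. True}"
  then show "y \<in> {d *s z |d. True}" by (auto simp: vector_smult_assoc)
next
  fix y assume c: "c \<noteq> 0" and "y \<in> {d *s z |d. True}"
  then obtain d where "y = d *s z" by auto
  then have "y = (d / c) *s (c *s z)" using c by (simp add: vector_smult_assoc)
  then show "y \<in> {d *s (c *s z) |d. True}" by blast
qed

lemma lf_G: "(\<Sum>i\<in>UNIV. a $ i * (x *s u + b *s v + y *s w) $ i)
   = x * (\<Sum>i\<in>UNIV. a $ i * u $ i) + b * (\<Sum>i\<in>UNIV. a $ i * v $ i) + (y::'a::field) * (\<Sum>i\<in>UNIV. a $ i * w $ i)"
  by (simp add: algebra_simps sum.distrib sum_distrib_left)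


theorem lemma3p2:
  fixes K :: "'a::{finite,field} set" and q h :: nat
    and u v w :: "'a ^ 3" and f :: "'a \<Rightarrow> 'a"
  assumes "\<exists>p k. prime p \<and> k > 0 \<and> q = p ^ k"
    and "h \<ge> 2"
    and "CARD('a) = q ^ h"
    and "is_subfield K" and "card K = q"
    and "lin_indep3 u v w"
    and "is_K_linear_functional K f" and "\<exists>x. f x \<noteq> 0"
  shows "blocking_set (LU {x *s u + f x *s v + y *s w | x y. y \<in> K})
       \<and> card (LU {x *s u + f x *s v + y *s w | x y. y \<in> K}) = q ^ h + q ^ (h - 1) + 1"
proof -
  obtain p k where pk: "prime p" "k > 0" "q = p ^ k" using assms(1) by blast
  have "p \<ge> 2" using pk(1) prime_ge_2_nat by blast
  moreover have "p \<le> p ^ k" using pk(2) \<open>p \<ge> 2\<close>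
    by (metis One_nat_def Suc_leI less_le_trans not_less one_less_numeral_iff order_refl power_increasing_iff power_one_right semiring_norm(76))
  ultimately have q2: "q \<ge> 2" using pk(3) by linarith
  have SK: "0 \<in> K" "1 \<in> K" "\<And>x y. x \<in> K \<Longrightarrow> y \<in> K \<Longrightarrow> x + y \<in> K"
     "\<And>x y. x \<in> K \<Longrightarrow> y \<in> K \<Longrightarrow> x * y \<in> K" "\<And>x. x \<in> K \<Longrightarrow> - x \<in> K"
     "\<And>x. x \<in> K \<Longrightarrow> inverse x \<in> K"
    using assms(4) unfolding is_subfield_def by (auto simp: inverse_eq_divide) 
  have Kdiff: "\<And>x y. x \<in> K \<Longrightarrow> y \<in> K \<Longrightarrow> x - y \<in> K"
    using SK(3,5) by (metis diff_conv_add_uminus)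
  have fK: "\<And>x. f x \<in> K" and fadd: "\<And>x y. f (x + y) = f x + f y"
    and flin: "\<And>c x. c \<in> K \<Longrightarrow> f (c * x) = c * f x"
    using assms(7) unfolding is_K_linear_functional_def by auto
  have fneg: "\<And>x. f (- x) = - f x"
    using flin[of "-1"] SK(2,5) by force
  have fdiff: "\<And>x y. f (x - y) = f x - f y"
    by (metis diff_conv_add_uminus fadd fneg)
  define G where "G = (\<lambda>a b c. a *s u + b *s v + c *s w)"
  define U where "U = {x *s u + f x *s v + y *s w | x y. y \<in> K}"
  have GU: "U = {G x (f x) y | x y. y \<in> K}" unfolding U_def G_def by simp
  have Geq: "\<And>a b c a' b' c'. G a b c = G a' b' c' \<longleftrightarrow> a = a' \<and> b = b' \<and> c = c'"
    unfolding G_def using G_eq[OF assms(6)] by blast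
  have Gsm: "\<And>d a b c. d *s G a b c = G (d*a) (d*b) (d*c)"
    unfolding G_def by (rule G_smult)
  have G0: "G 0 0 0 = 0" unfolding G_def by simp
  have Gnz: "\<And>a b c. G a b c \<noteq> 0 \<longleftrightarrow> a \<noteq> 0 \<or> b \<noteq> 0 \<or> c \<noteq> 0"
    using Geq G0 by metis
  have card_UNIV: "card (UNIV :: 'a set) = q ^ h" using assms(3) by simp
  have blocking: "blocking_set (LU U)"
    unfolding blocking_set_def
  proof
    show "LU U \<subseteq> PG2_points" unfolding LU_def PG2_points_def by blast
    show "\<forall>l\<in>PG2_lines. LU U \<inter> l \<noteq> {}"
    proof
      fix l :: "('a^3) set set" assume "l \<in> PG2_lines"
      then obtain a :: "'a^3" where l: "l = proj_line a" unfolding PG2_lines_def by blast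
      define lf where "lf = (\<lambda>z::'a^3. \<Sum>i\<in>UNIV. a $ i * z $ i)"
      have lfG: "\<And>x b y. lf (G x b y) = x * lf u + b * lf v + y * lf w"
        unfolding lf_def G_def by (rule lf_G)
      define L where "L = (\<lambda>(x,y). lf (G x (f x) y))"
      have "\<not> inj_on L ((UNIV::'a set) \<times> K)"
      proof
        assume "inj_on L ((UNIV::'a set) \<times> K)"
        then have "card (L ` ((UNIV::'a set) \<times> K)) = card ((UNIV::'a set) \<times> K)" by (simp add: card_image)
        also have "\<dots> = q ^ h * q" using card_UNIV assms(5) by (simp add: card_cartesian_product)
        finally have "q ^ h * q \<le> q ^ h" by (metis card_mono card_UNIV finite subset_UNIV)
        moreover have "q ^ h > 0" using q2 by simp
        ultimately show False using q2 by simp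
      qed
      then obtain x1 y1 x2 y2 where xy: "y1 \<in> K" "y2 \<in> K" "(x1, y1) \<noteq> (x2, y2)"
        "L (x1, y1) = L (x2, y2)"
        unfolding inj_on_def by auto
      define d where "d = x1 - x2"
      define e where "e = y1 - y2"
      have eK: "e \<in> K" unfolding e_def using xy Kdiff by blast
      have de: "d \<noteq> 0 \<or> e \<noteq> 0" using xy(3) unfolding d_def e_def by auto
      have "lf (G d (f d) e) = L (x1, y1) - L (x2, y2)"
        unfolding L_def d_def e_def by (simp add: lfG fdiff algebra_simps)
      then have z0: "lf (G d (f d) e) = 0" using xy(4) by simp
      have znz: "G d (f d) e \<noteq> 0" using Gnz de by blast
      have "pt (G d (f d) e) \<in> LU U" unfolding LU_def GU using eK znz by blast
      moreover have "pt (G d (f d) e) \<in> l" unfolding l proj_line_def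
        using z0 znz unfolding lf_def by blast
      ultimately show "LU U \<inter> l \<noteq> {}" by blast
    qed
  qed
  obtain x1 where x1: "f x1 \<noteq> 0" using assms(8) by blast
  define x0 where "x0 = inverse (f x1) * x1"
  have fx0: "f x0 = 1" unfolding x0_def using flin[OF SK(6)[OF fK[of x1]]] x1 by simp
  define Ker where "Ker = {x. f x = 0}"
  define F1 where "F1 = {x. f x = 1}"
  have "bij_betw (\<lambda>x. (f x, x - f x * x0)) UNIV (K \<times> Ker)"
  proof (rule bij_betw_byWitness[where f' = "\<lambda>(c, y). y + c * x0"])
    show "\<forall>a\<in>UNIV. (\<lambda>(c, y). y + c * x0) (f a, a - f a * x0) = a" by simp
    show "\<forall>b\<in>K \<times> Ker. (f ((\<lambda>(c, y). y + c * x0) b), (\<lambda>(c, y). y + c * x0) b - f ((\<lambda>(c, y). y + c * x0) b) * x0) = b"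
      using fadd flin fx0 unfolding Ker_def by auto
    show "(\<lambda>x. (f x, x - f x * x0)) ` UNIV \<subseteq> K \<times> Ker"
      using fK fdiff flin fx0 unfolding Ker_def by auto
    show "(\<lambda>(c, y). y + c * x0) ` (K \<times> Ker) \<subseteq> UNIV" by simp
  qed
  then have "card (UNIV :: 'a set) = card (K \<times> Ker)" by (rule bij_betw_same_card)
  then have "q ^ h = q * card Ker" using card_UNIV assms(5) by (simp add: card_cartesian_product)
  moreover have "q ^ h = q * q ^ (h - 1)" using assms(2)
    by (cases h) auto
  ultimately have cardKer: "card Ker = q ^ (h - 1)" using q2 by simp
  have "bij_betw (\<lambda>x. x + x0) Ker F1"
  proof (rule bij_betw_byWitness[where f' = "\<lambda>x. x - x0"])
  qed (auto simp: Ker_def F1_def fadd fdiff fx0)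
  then have cardF1: "card F1 = q ^ (h - 1)" using cardKer by (simp add: bij_betw_same_card)
  have "q ^ (h - 1) \<ge> q ^ 1" using assms(2) q2 by (intro power_increasing) auto
  then have "card Ker \<ge> 2" using cardKer q2 by simp
  have "\<exists>k0. k0 \<in> Ker \<and> k0 \<noteq> 0"
  proof (rule ccontr)
    assume "\<not> (\<exists>k0. k0 \<in> Ker \<and> k0 \<noteq> 0)"
    then have "Ker \<subseteq> {0}" by blast
    then have "card Ker \<le> 1" using card_mono[of "{0}" Ker] by simp
    then show False using \<open>card Ker \<ge> 2\<close> by simp
  qed
  then obtain k0 where k0: "k0 \<in> Ker" "k0 \<noteq> 0" by blast
  define S1 where "S1 = (\<lambda>x. pt (G x (f x) 1)) ` UNIV"
  define S2 where "S2 = (\<lambda>x. pt (G x 1 0)) ` F1"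
  have LUeq: "LU U = insert (pt (G 1 0 0)) (S1 \<union> S2)"
  proof (intro set_eqI iffI)
    fix P assume "P \<in> LU U"
    then obtain x y where y: "y \<in> K" and P: "P = pt (G x (f x) y)" and nz: "G x (f x) y \<noteq> 0"
      unfolding LU_def GU by blast
    show "P \<in> insert (pt (G 1 0 0)) (S1 \<union> S2)"
    proof (cases "y = 0")
      case False
      have fi: "f (inverse y * x) = inverse y * f x" using flin SK(6) y by blast
      have "G x (f x) y = y *s G (inverse y * x) (f (inverse y * x)) 1"
        unfolding Gsm Geq fi using False by simp
      then have "P = pt (G (inverse y * x) (f (inverse y * x)) 1)"
        using P False by (simp add: pt_smult)
      then show ?thesis unfolding S1_def by blast
    next
      case True
      show ?thesis
      proof (cases "f x = 0")
        case True
        then have "x \<noteq> 0" using nz \<open>y = 0\<close> Gnz by blast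
        have "G x (f x) y = x *s G 1 0 0" unfolding Gsm Geq using True \<open>y = 0\<close> by simp
        then have "P = pt (G 1 0 0)" using P \<open>x \<noteq> 0\<close> by (simp add: pt_smult)
        then show ?thesis by blast
      next
        case False
        have fi: "f (inverse (f x) * x) = 1" using flin SK(6) fK False by simp
        have "G x (f x) y = f x *s G (inverse (f x) * x) 1 0"
          unfolding Gsm Geq using False \<open>y = 0\<close> by simp
        then have "P = pt (G (inverse (f x) * x) 1 0)" using P False by (simp add: pt_smult)
        then show ?thesis unfolding S2_def F1_def using fi by blast
      qed
    qed
  next
    fix P assume P: "P \<in> insert (pt (G 1 0 0)) (S1 \<union> S2)"
    have k0': "f k0 = 0" using k0 unfolding Ker_def by simp
    have "G k0 (f k0) 0 = k0 *s G 1 0 0" unfolding Gsm Geq k0' by simp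
    then have "pt (G 1 0 0) = pt (G k0 (f k0) 0)" using k0 by (simp add: pt_smult)
    moreover have "G k0 (f k0) 0 \<noteq> 0" using Gnz k0 by blast
    ultimately have a: "pt (G 1 0 0) \<in> LU U" unfolding LU_def GU using SK(1) by blast
    have "\<And>x. pt (G x (f x) 1) \<in> LU U"
    proof -
      fix x
      have "G x (f x) 1 \<in> U" unfolding GU using SK(2) by blast
      moreover have "G x (f x) 1 \<noteq> 0" using Gnz by simp
      ultimately show "pt (G x (f x) 1) \<in> LU U" unfolding LU_def by blast
    qed
    then have b: "S1 \<subseteq> LU U" unfolding S1_def by blast
    have "\<And>x. x \<in> F1 \<Longrightarrow> pt (G x 1 0) \<in> LU U"
    proof -
      fix x assume "x \<in> F1"
      then have "G x 1 0 = G x (f x) 0" unfolding F1_def by simp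
      moreover have "G x 1 0 \<noteq> 0" using Gnz by simp
      moreover have "G x (f x) 0 \<in> U" unfolding GU using SK(1) by blast
      ultimately show "pt (G x 1 0) \<in> LU U" unfolding LU_def by auto
    qed
    then have c: "S2 \<subseteq> LU U" unfolding S2_def by blast
    show "P \<in> LU U" using P a b c by blast
  qed
  have inj1: "inj_on (\<lambda>x. pt (G x (f x) 1)) UNIV"
  proof (rule inj_onI)
    fix x y assume "pt (G x (f x) 1) = pt (G y (f y) 1)"
    then obtain c where "G y (f y) 1 = c *s G x (f x) 1" using pt_eqD by blast
    then show "x = y" unfolding Gsm Geq by simp
  qed
  have inj2: "inj_on (\<lambda>x. pt (G x 1 0)) F1"
  proof (rule inj_onI)
    fix x y assume "pt (G x 1 0) = pt (G y 1 0)"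
    then obtain c where "G y 1 0 = c *s G x 1 0" using pt_eqD by blast
    then show "x = y" unfolding Gsm Geq by simp
  qed
  have cS1: "card S1 = q ^ h" unfolding S1_def using inj1 card_UNIV by (simp add: card_image)
  have cS2: "card S2 = q ^ (h - 1)" unfolding S2_def using inj2 cardF1 by (simp add: card_image)
  have disj: "S1 \<inter> S2 = {}"
  proof (rule ccontr)
    assume "S1 \<inter> S2 \<noteq> {}"
    then obtain x y where "pt (G x (f x) 1) = pt (G y 1 0)" unfolding S1_def S2_def by blast
    then obtain c where "G y 1 0 = c *s G x (f x) 1" using pt_eqD by blast
    then show False unfolding Gsm Geq by auto
  qed
  have n1: "pt (G 1 0 0) \<notin> S1"
  proof
    assume "pt (G 1 0 0) \<in> S1"
    then obtain x where "pt (G x (f x) 1) = pt (G 1 0 0)" unfolding S1_def by blast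
    then obtain c where "G 1 0 0 = c *s G x (f x) 1" using pt_eqD by blast
    then show False unfolding Gsm Geq by auto
  qed
  have n2: "pt (G 1 0 0) \<notin> S2"
  proof
    assume "pt (G 1 0 0) \<in> S2"
    then obtain x where "pt (G x 1 0) = pt (G 1 0 0)" unfolding S2_def by blast
    then obtain c where "G 1 0 0 = c *s G x 1 0" using pt_eqD by blast
    then show False unfolding Gsm Geq by auto
  qed
  have cardLU: "card (LU U) = q ^ h + q ^ (h - 1) + 1"
    unfolding LUeq using n1 n2 disj cS1 cS2 by (simp add: card_Un_disjoint)
  show ?thesis using blocking cardLU unfolding U_def by simp
qed

end
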